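(* Let $\mathbf x,\mathbf y\in\mathbb R^\infty$ be such that the functions $t\mapsto\|\mathbf x\|_t$ and $t\mapsto\|\mathbf y\|_t$ on $(0,\infty)$ are not identical. Then the set $\{t\in(0,\infty):\|\mathbf x\|_t=\|\mathbf y\|_t\}$ is finite. Consequently, for any finite set $\mathcal X\subseteq\mathbb R^\infty$, the set of points $s\in(0,\infty)$ for which there exist $\mathbf x,\mathbf y\in\mathcal X$ with $\|\mathbf x\|_s=\|\mathbf y\|_s$ but $t\mapsto\|\mathbf x\|_t$ not identical to $t\mapsto\|\mathbf y\|_t$ is finite.
   Context: $\mathbb R^\infty$ is the set of real sequences with only finitely many nonzero entries, and $\|\mathbf x\|_t=(\sum_n|x_n|^t)^{1/t}$ for $t\in(0,\infty)$. *)

theory Defs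
  imports "HOL-Analysis.Analysis"
begin

definition Rinf :: "(nat \<Rightarrow> real) set" where
  "Rinf = {x. finite {n. x n \<noteq> 0}}"

definition tnorm :: "real \<Rightarrow> (nat \<Rightarrow> real) \<Rightarrow> real" where
  "tnorm t x = (\<Sum>n\<in>{n. x n \<noteq> 0}. \<bar>x n\<bar> powr t) powr (1 / t)"

end

theory Submission
  imports Defs
begin

lemma rolle_count:
  fixes f f' :: "real \<Rightarrow> real"
  assumes der: "\<And>t. (f has_real_derivative f' t) (at t)"
  shows "finite Z \<Longrightarrow> card Z = Suc n \<Longrightarrow> (\<forall>z\<in>Z. f z = 0) \<Longrightarrow>
    \<exists>W. finite W \<and> card W = n \<and> (\<forall>w\<in>W. f' w = 0) \<and> (\<forall>w\<in>W. Min Z < w \<and> w < Max Z)"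
proof (induction n arbitrary: Z)
  case 0
  then show ?case by (intro exI[of _ "{}"]) auto
next
  case (Suc n)
  define a where "a = Max Z"
  define Z' where "Z' = Z - {a}"
  have Zne: "Z \<noteq> {}" using Suc.prems by auto
  have aZ: "a \<in> Z" using Suc.prems Zne unfolding a_def by auto
  have cZ': "card Z' = Suc n" "finite Z'" using Suc.prems aZ unfolding Z'_def by auto
  have Z'ne: "Z' \<noteq> {}" using cZ' by auto
  obtain W' where W': "finite W'" "card W' = n" "\<forall>w\<in>W'. f' w = 0"
     "\<forall>w\<in>W'. Min Z' < w \<and> w < Max Z'"
    using Suc.IH[OF cZ'(2) cZ'(1)] Suc.prems(3) unfolding Z'_def by auto
  define b where "b = Max Z'"
  have bZ': "b \<in> Z'" using cZ' Z'ne unfolding b_def by auto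
  have ba: "b < a"
    using bZ' Suc.prems(1) unfolding Z'_def a_def
    by (metis DiffE Max_ge insertI1 order_le_less)
  have fab: "f b = f a" using bZ' aZ Suc.prems(3) unfolding Z'_def by auto
  have cont: "continuous_on {b..a} f"
    using der by (meson DERIV_continuous continuous_at_imp_continuous_on)
  obtain w where w: "b < w" "w < a" "DERIV f w :> 0"
    using Rolle[OF ba fab cont] der real_differentiable_def by blast
  have fw: "f' w = 0" using w(3) der DERIV_unique by blast
  have minle: "Min Z \<le> Min Z'" using cZ' Z'ne Suc.prems(1) unfolding Z'_def
    by (simp add: Min_antimono)
  have minb: "Min Z \<le> b" using bZ' Suc.prems(1) unfolding Z'_def by auto
  have wnot: "w \<notin> W'" using W'(4) w(1) b_def by force
  show ?case
  proof (intro exI[of _ "insert w W'"] conjI)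
    show "finite (insert w W')" using W' by auto
    show "card (insert w W') = Suc n" using W' wnot by auto
    show "\<forall>x\<in>insert w W'. f' x = 0" using W' fw by auto
    show "\<forall>x\<in>insert w W'. Min Z < x \<and> x < Max Z"
      using W'(4) w minle minb ba unfolding a_def b_def by fastforce
  qed
qed

definition gsum :: "'i set \<Rightarrow> ('i \<Rightarrow> real) \<Rightarrow> ('i \<Rightarrow> real) \<Rightarrow> real \<Rightarrow> real" where
  "gsum I e c t = (\<Sum>i\<in>I. c i * exp (e i * t))"

lemma gsum_deriv: "(gsum I e c has_real_derivative gsum I e (\<lambda>i. c i * e i) t) (at t)"
  unfolding gsum_def
  by (auto intro!: derivative_eq_intros simp: algebra_simps)

lemma gsum_zero:
  "finite I \<Longrightarrow> card I = n \<Longrightarrow> finite Z \<Longrightarrow> card Z = n \<Longrightarrow> (\<forall>z\<in>Z. gsum I e c z = 0)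
   \<Longrightarrow> gsum I e c t = 0"
proof (induction n arbitrary: I e c Z t)
  case 0
  then show ?case by (simp add: gsum_def)
next
  case (Suc n)
  obtain \<mu> where mu: "\<mu> \<in> I" using Suc.prems by fastforce
  define h where "h = gsum I (\<lambda>i. e i - e \<mu>) c"
  have hg: "h t = exp (- e \<mu> * t) * gsum I e c t" for t
    unfolding h_def gsum_def sum_distrib_left
    by (intro sum.cong refl) (simp add: algebra_simps exp_diff exp_minus divide_inverse)
  define c' where "c' = (\<lambda>i. c i * (e i - e \<mu>))"
  have h'eq: "gsum I (\<lambda>i. e i - e \<mu>) c' s = gsum (I - {\<mu>}) (\<lambda>i. e i - e \<mu>) c' s" for s
    unfolding gsum_def using Suc.prems(1) mu
    by (simp add: sum.remove c'_def)
  have hder: "(h has_real_derivative gsum I (\<lambda>i. e i - e \<mu>) c' s) (at s)" for s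
    unfolding h_def c'_def using gsum_deriv[of I "\<lambda>i. e i - e \<mu>" c s] .
  obtain W where W: "finite W" "card W = n" "\<forall>w\<in>W. gsum I (\<lambda>i. e i - e \<mu>) c' w = 0"
    using rolle_count[OF hder, of Z n] Suc.prems hg by auto
  have h'0: "gsum I (\<lambda>i. e i - e \<mu>) c' s = 0" for s
    unfolding h'eq
    by (rule Suc.IH) (use Suc.prems mu W h'eq in auto)
  have hconst: "h s = h u" for s u
    using DERIV_isconst_all[of h s u] hder h'0 by metis
  obtain z where z: "z \<in> Z" using Suc.prems by fastforce
  have "h z = 0" using hg Suc.prems(5) z by auto
  hence "h t = 0" using hconst by metis
  thus ?case using hg by simp
qed

lemma powr_inv_inj:
  fixes a b t :: real
  assumes "t > 0" "a \<ge> 0" "b \<ge> 0" "a powr (1/t) = b powr (1/t)"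
  shows "a = b"
proof -
  have "(a powr (1/t)) powr t = (b powr (1/t)) powr t" using assms by simp
  moreover have "(1/t) * t = 1" using assms by simp
  ultimately show ?thesis using assms by (metis powr_powr powr_one)
qed

definition Sx :: "real \<Rightarrow> (nat \<Rightarrow> real) \<Rightarrow> real" where
  "Sx t x = (\<Sum>n\<in>{n. x n \<noteq> 0}. \<bar>x n\<bar> powr t)"

lemma tnorm_Sx: "tnorm t x = Sx t x powr (1/t)"
  unfolding tnorm_def Sx_def ..

lemma Sx_nonneg: "Sx t x \<ge> 0"
  unfolding Sx_def by (intro sum_nonneg) auto

lemma Sx_gsum:
  assumes "x \<in> Rinf" "y \<in> Rinf"
  shows "Sx t x - Sx t y = gsum ({n. x n \<noteq> 0} <+> {n. y n \<noteq> 0})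
     (case_sum (\<lambda>n. ln \<bar>x n\<bar>) (\<lambda>n. ln \<bar>y n\<bar>)) (case_sum (\<lambda>_. 1) (\<lambda>_. -1)) t"
proof -
  have f: "finite {n. x n \<noteq> 0}" "finite {n. y n \<noteq> 0}" using assms unfolding Rinf_def by auto
  show ?thesis
    unfolding gsum_def sum.Plus[OF f] Sx_def
    by (simp add: o_def powr_def sum_negf mult.commute)
qed

lemma part1:
  assumes x: "x \<in> Rinf" and y: "y \<in> Rinf" and t0: "t0 > 0" "tnorm t0 x \<noteq> tnorm t0 y"
  shows "finite {t::real. t > 0 \<and> tnorm t x = tnorm t y}"
proof (rule ccontr)
  define I where "I = {n. x n \<noteq> 0} <+> {n. y n \<noteq> 0}"
  define e where "e = case_sum (\<lambda>n. ln \<bar>x n\<bar>) (\<lambda>n. ln \<bar>y n\<bar>)"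
  define c :: "nat + nat \<Rightarrow> real" where "c = case_sum (\<lambda>_. 1) (\<lambda>_. -1)"
  have fI: "finite I" using x y unfolding Rinf_def I_def by auto
  assume "infinite {t::real. t > 0 \<and> tnorm t x = tnorm t y}"
  then obtain Z where Z: "finite Z" "card Z = card I" "Z \<subseteq> {t::real. t > 0 \<and> tnorm t x = tnorm t y}"
    using infinite_arbitrarily_large by blast
  have "\<forall>z\<in>Z. gsum I e c z = 0"
  proof
    fix z assume "z \<in> Z"
    hence "z > 0" "tnorm z x = tnorm z y" using Z by auto
    hence "Sx z x = Sx z y" using powr_inv_inj Sx_nonneg tnorm_Sx by metis
    thus "gsum I e c z = 0" using Sx_gsum[OF x y, of z] unfolding I_def e_def c_def by simp
  qed
  hence "gsum I e c t0 = 0" using gsum_zero[OF fI refl Z(1) Z(2)] by blast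
  hence "Sx t0 x = Sx t0 y" using Sx_gsum[OF x y, of t0] unfolding I_def e_def c_def by simp
  thus False using t0 tnorm_Sx by metis
qed

theorem mainTheorem8:
  shows "(\<forall>x\<in>Rinf. \<forall>y\<in>Rinf.
            (\<exists>t>0. tnorm t x \<noteq> tnorm t y) \<longrightarrow>
            finite {t::real. t > 0 \<and> tnorm t x = tnorm t y})
       \<and> (\<forall>X. X \<subseteq> Rinf \<longrightarrow> finite X \<longrightarrow>
            finite {s::real. s > 0 \<and> (\<exists>x\<in>X. \<exists>y\<in>X. tnorm s x = tnorm s y \<and>
                                   (\<exists>t>0. tnorm t x \<noteq> tnorm t y))})"
proof (intro conjI allI impI ballI)
  fix x y assume "x \<in> Rinf" "y \<in> Rinf" "\<exists>t>0. tnorm t x \<noteq> tnorm t y"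
  then show "finite {t::real. t > 0 \<and> tnorm t x = tnorm t y}" using part1 by blast
next
  fix X assume X: "X \<subseteq> Rinf" "finite X"
  define P where "P = {p \<in> X \<times> X. \<exists>t>0. tnorm t (fst p) \<noteq> tnorm t (snd p)}"
  have fP: "finite P" using X unfolding P_def by auto
  have "{s::real. s > 0 \<and> (\<exists>x\<in>X. \<exists>y\<in>X. tnorm s x = tnorm s y \<and>
                                   (\<exists>t>0. tnorm t x \<noteq> tnorm t y))}
     \<subseteq> (\<Union>p\<in>P. {t::real. t > 0 \<and> tnorm t (fst p) = tnorm t (snd p)})"
    unfolding P_def by force
  moreover have "finite (\<Union>p\<in>P. {t::real. t > 0 \<and> tnorm t (fst p) = tnorm t (snd p)})"
    using fP X part1 unfolding P_def by (intro finite_UN_I) (auto simp: subset_iff)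
  ultimately show "finite {s::real. s > 0 \<and> (\<exists>x\<in>X. \<exists>y\<in>X. tnorm s x = tnorm s y \<and>
                                   (\<exists>t>0. tnorm t x \<noteq> tnorm t y))}"
    by (rule finite_subset)
qed

end
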